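(* Let $n\ge 1$ and $j$ be integers with $0\le j\le n-1$. Then \[ \sum_{k=j}^{n}(-1)^{k-j}{n\brace k}{k\brack j}H_k=\left(\binom{n}{j}-1\right)\frac{B_{n-j}}{n-j}. \]
   Context: $B_m$ denotes the $m$th Bernoulli number, defined by $\frac{t}{e^t-1}=\sum_{m\ge0}B_m\frac{t^m}{m!}$ (so $B_0=1$, $B_1=-1/2$). ${k\brack j}$ denotes the (unsigned) Stirling number of the first kind, defined by $x(x+1)\cdots(x+k-1)=\sum_{j=0}^k{k\brack j}x^j$, and ${n\brace k}$ the Stirling number of the second kind, defined by $x^n=\sum_{k=0}^n(-1)^{n-k}{n\brace k}x(x+1)\cdots(x+k-1)$. $H_k=1+\frac12+\cdots+\frac1k$ is the $k$th harmonic number, $H_0=0$. *)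

theory Defs
  imports "HOL-Analysis.Analysis" "HOL-Combinatorics.Stirling"
    "HOL-Computational_Algebra.Formal_Power_Series"
begin

definition bernoulli_gf :: "real fps" where
  "bernoulli_gf = fps_X / (fps_exp 1 - 1)"

definition bernoulli :: "nat \<Rightarrow> real" where
  "bernoulli m = fact m * fps_nth bernoulli_gf m"

end

theory Submission
  imports Defs
begin



lemma bgf_mult: "bernoulli_gf * (fps_exp 1 - 1) = (fps_X :: real fps)"
proof -
  define h :: "real fps" where "h = fps_shift 1 (fps_exp 1 - 1)"
  have e: "fps_exp 1 - 1 = fps_X * h"
    unfolding h_def fps_eq_iff
  proof
    fix n show "fps_nth (fps_exp 1 - 1) n = fps_nth (fps_X * fps_shift 1 (fps_exp 1 - 1 :: real fps)) n"
      by (cases n) auto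
  qed
  have h0: "fps_nth h 0 \<noteq> 0" by (simp add: h_def)
  have "h * inverse h = 1" using h0 by (simp add: inverse_mult_eq_1')
  then have x: "fps_X = inverse h * (fps_exp 1 - 1)" by (simp add: e mult.commute mult.left_commute)
  have ne: "fps_exp 1 - 1 \<noteq> (0::real fps)"
  proof
    assume "fps_exp 1 - 1 = (0::real fps)"
    then have "fps_nth (fps_exp 1 - 1) 1 = fps_nth (0::real fps) 1" by simp
    then show False by simp
  qed
  have "bernoulli_gf = inverse h" unfolding bernoulli_gf_def
    by (subst x) (rule fps_divide_times_eq[OF ne])
  then show ?thesis using x by simp
qed

definition bpoly :: "nat \<Rightarrow> real \<Rightarrow> real" where
  "bpoly N y = fact N * fps_nth (bernoulli_gf * fps_exp y) N"

lemma bpoly_diff: "N \<ge> 1 \<Longrightarrow> bpoly N (y+1) - bpoly N y = N * y ^ (N-1)"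
proof -
  assume N: "N \<ge> 1"
  have "bernoulli_gf * fps_exp (y+1) - bernoulli_gf * fps_exp y = fps_X * fps_exp y"
    by (simp add: fps_exp_add_mult algebra_simps flip: bgf_mult)
  then have "bpoly N (y+1) - bpoly N y = fact N * fps_nth (fps_X * fps_exp y) N"
    unfolding bpoly_def by (metis fps_sub_nth right_diff_distrib)
  also have "\<dots> = fact N * y^(N-1) / fact (N-1)" using N by simp
  also have "\<dots> = N * y^(N-1)" using N
    by (cases N) (auto simp: field_simps)
  finally show ?thesis .
qed

lemma bpoly_0: "bpoly N 0 = bernoulli N"
  by (simp add: bpoly_def bernoulli_def)

lemma bpoly_sum: "bpoly N y = (\<Sum>i\<le>N. real (N choose i) * bernoulli i * y ^ (N - i))"
proof -
  have "bpoly N y = (\<Sum>i\<le>N. fact N * (fps_nth bernoulli_gf i * (y^(N-i) / fact (N-i))))"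
    unfolding bpoly_def fps_mult_nth by (simp add: sum_distrib_left atLeast0AtMost)
  also have "\<dots> = (\<Sum>i\<le>N. real (N choose i) * bernoulli i * y ^ (N - i))"
  proof (rule sum.cong[OF refl])
    fix i assume "i \<in> {..N}"
    then have "i \<le> N" by simp
    then show "fact N * (fps_nth bernoulli_gf i * (y^(N-i) / fact (N-i))) = real (N choose i) * bernoulli i * y ^ (N - i)"
      by (simp add: binomial_fact bernoulli_def field_simps)
  qed
  finally show ?thesis .
qed



definition sS :: "nat \<Rightarrow> nat \<Rightarrow> real" where
  "sS n k = (-1) ^ (n - k) * real (Stirling n k)"

lemma sS_Suc0: "sS (Suc n) 0 = 0" by (simp add: sS_def)
lemma sS_less: "n < k \<Longrightarrow> sS n k = 0" by (simp add: sS_def)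

lemma sS_rec: "sS (Suc n) (Suc k) = sS n k - real (Suc k) * sS n (Suc k)"
proof (cases "k < n")
  case True
  then have "n - k = Suc (n - Suc k)" by simp
  then show ?thesis by (simp add: sS_def algebra_simps)
next
  case False
  then show ?thesis by (cases "k = n") (auto simp: sS_def)
qed

lemma sS_transfer:
  "(\<Sum>k\<le>Suc n. sS (Suc n) k * f k) = (\<Sum>k\<le>n. sS n k * (f (Suc k) - real k * f k))"
proof -
  have "(\<Sum>k\<le>Suc n. sS (Suc n) k * f k) = (\<Sum>k\<le>n. sS (Suc n) (Suc k) * f (Suc k))"
    by (subst sum.atMost_Suc_shift) (simp add: sS_Suc0)
  also have "\<dots> = (\<Sum>k\<le>n. sS n k * f (Suc k)) - (\<Sum>k\<le>n. real (Suc k) * sS n (Suc k) * f (Suc k))"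
    by (simp add: sS_rec algebra_simps sum_subtractf)
  also have "(\<Sum>k\<le>n. real (Suc k) * sS n (Suc k) * f (Suc k)) = (\<Sum>k\<le>Suc n. real k * sS n k * f k)"
    by (subst sum.atMost_Suc_shift) simp
  also have "\<dots> = (\<Sum>k\<le>n. real k * sS n k * f k)"
    by (simp add: sS_less)
  finally show ?thesis by (simp add: algebra_simps sum_subtractf)
qed

lemma pow_poch: "(x::real) ^ n = (\<Sum>k\<le>n. sS n k * pochhammer x k)"
proof (induction n)
  case 0 then show ?case by (simp add: sS_def)
next
  case (Suc n)
  have "(\<Sum>k\<le>Suc n. sS (Suc n) k * pochhammer x k) = (\<Sum>k\<le>n. sS n k * (pochhammer x (Suc k) - real k * pochhammer x k))"
    by (rule sS_transfer)
  also have "\<dots> = (\<Sum>k\<le>n. x * (sS n k * pochhammer x k))"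
    by (intro sum.cong refl) (simp add: pochhammer_rec' algebra_simps)
  also have "\<dots> = x ^ Suc n" by (simp add: Suc sum_distrib_left)
  finally show ?case ..
qed

lemma poch_coeffs:
  "(\<Sum>k\<le>n. w k * pochhammer (x::real) k) = (\<Sum>j\<le>n. (\<Sum>k\<le>n. w k * real (stirling k j)) * x ^ j)"
proof -
  have "(\<Sum>k\<le>n. w k * pochhammer (x::real) k) = (\<Sum>k\<le>n. \<Sum>j\<le>n. w k * real (stirling k j) * x ^ j)"
  proof (intro sum.cong refl)
    fix k assume "k \<in> {..n}"
    then have kn: "k \<le> n" by simp
    have "pochhammer x k = (\<Sum>j\<le>k. real (stirling k j) * x ^ j)" by (simp add: stirling_pochhammer)
    also have "\<dots> = (\<Sum>j\<le>n. real (stirling k j) * x ^ j)"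
      using kn by (intro sum.mono_neutral_left) auto
    finally show "w k * pochhammer x k = (\<Sum>j\<le>n. w k * real (stirling k j) * x ^ j)"
      by (simp add: sum_distrib_left mult.assoc)
  qed
  also have "\<dots> = (\<Sum>j\<le>n. (\<Sum>k\<le>n. w k * real (stirling k j)) * x ^ j)"
    by (subst sum.swap) (simp add: sum_distrib_right)
  finally show ?thesis .
qed

definition g :: "nat \<Rightarrow> real \<Rightarrow> real" where
  "g n x = (\<Sum>k\<le>n. sS n k * (harm k * pochhammer x k))"
definition a :: "nat \<Rightarrow> nat \<Rightarrow> real" where
  "a n j = (\<Sum>k\<le>n. sS n k * harm k * real (stirling k j))"
definition R :: "nat \<Rightarrow> real \<Rightarrow> real" where
  "R n x = (\<Sum>k\<le>n. sS n k * (pochhammer x (Suc k) / real (Suc k)))"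
definition Q :: "nat \<Rightarrow> real \<Rightarrow> real" where
  "Q n x = (-1) ^ (Suc n) * (bpoly (Suc n) (-x) - bernoulli (Suc n)) / real (Suc n)"
definition qc :: "nat \<Rightarrow> nat \<Rightarrow> real" where
  "qc n j = (if j = 0 then 0 else (-1) ^ (Suc n + j) * real (Suc n choose j) * bernoulli (Suc n - j) / real (Suc n))"
definition rc :: "nat \<Rightarrow> nat \<Rightarrow> real" where
  "rc n j = (\<Sum>k\<le>Suc n. (if k = 0 then 0 else sS n (k - 1) / real k) * real (stirling k j))"

lemma g_rec: "g (Suc n) x = x * g n x + R n x"
proof -
  have "g (Suc n) x = (\<Sum>k\<le>n. sS n k * (harm (Suc k) * pochhammer x (Suc k) - real k * (harm k * pochhammer x k)))"
    unfolding g_def by (rule sS_transfer)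
  also have "\<dots> = (\<Sum>k\<le>n. x * (sS n k * (harm k * pochhammer x k)) + sS n k * (pochhammer x (Suc k) / real (Suc k)))"
  proof (intro sum.cong refl)
    fix k
    have "harm (Suc k) * pochhammer x (Suc k) - real k * (harm k * pochhammer x k)
      = x * (harm k * pochhammer x k) + pochhammer x (Suc k) / real (Suc k)"
      by (simp add: harm_Suc pochhammer_rec' field_simps)
    then show "sS n k * (harm (Suc k) * pochhammer x (Suc k) - real k * (harm k * pochhammer x k)) =
         x * (sS n k * (harm k * pochhammer x k)) + sS n k * (pochhammer x (Suc k) / real (Suc k))"
      by (simp add: algebra_simps)
  qed
  also have "\<dots> = x * g n x + R n x"
    by (simp add: g_def R_def sum.distrib sum_distrib_left)
  finally show ?thesis .
qed

lemma R_diff: "R n x - R n (x - 1) = x ^ n"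
proof -
  have "R n x - R n (x - 1) = (\<Sum>k\<le>n. sS n k * pochhammer x k)"
    unfolding R_def sum_subtractf[symmetric]
  proof (intro sum.cong refl)
    fix k
    have "pochhammer x (Suc k) - pochhammer (x - 1) (Suc k) = real (Suc k) * pochhammer x k"
    proof -
      have 1: "pochhammer (x-1) (Suc k) = (x-1) * pochhammer x k" using pochhammer_rec[of "x-1" k] by simp
      have 2: "pochhammer x (Suc k) = (x + real k) * pochhammer x k" by (simp add: pochhammer_rec')
      show ?thesis unfolding 1 2 by (simp add: algebra_simps)
    qed
    then show "sS n k * (pochhammer x (Suc k) / real (Suc k)) - sS n k * (pochhammer (x - 1) (Suc k) / real (Suc k)) =
         sS n k * pochhammer x k"
      by (simp add: right_diff_distrib[symmetric] diff_divide_distrib[symmetric] del: of_nat_Suc)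
  qed
  also have "\<dots> = x ^ n" by (simp add: pow_poch)
  finally show ?thesis .
qed

lemma R_0: "R n 0 = 0"
  by (simp add: R_def pochhammer_0_left)

lemma Q_diff: "Q n x - Q n (x - 1) = x ^ n"
proof -
  have "bpoly (Suc n) (-x + 1) - bpoly (Suc n) (-x) = real (Suc n) * (-x) ^ n"
    using bpoly_diff[of "Suc n" "-x"] by simp
  then have "bpoly (Suc n) (-(x - 1)) - bpoly (Suc n) (-x) = real (Suc n) * (-x) ^ n"
    by (simp add: algebra_simps)
  then have e: "bpoly (Suc n) (-x) - bpoly (Suc n) (-(x - 1)) = - (real (Suc n) * (-x) ^ n)"
    by simp
  have "Q n x - Q n (x - 1) = (-1) ^ Suc n * (bpoly (Suc n) (-x) - bpoly (Suc n) (-(x - 1))) / real (Suc n)"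
    unfolding Q_def by (simp add: diff_divide_distrib[symmetric] right_diff_distrib[symmetric] del: of_nat_Suc) (simp add: divide_simps algebra_simps del: of_nat_Suc)
  also have "\<dots> = (-1) ^ Suc n * (- (real (Suc n) * (-x) ^ n)) / real (Suc n)"
    by (simp only: e)
  also have "\<dots> = (-1) ^ n * (-x) ^ n"
    by (simp del: of_nat_Suc)
  also have "\<dots> = x ^ n"
    by (simp flip: power_mult_distrib)
  finally show ?thesis .
qed

lemma Q_0: "Q n 0 = 0"
  by (simp add: Q_def bpoly_0)

lemma RQ_nat: "R n (real m) = Q n (real m)"
proof (induction m)
  case 0 then show ?case by (simp add: R_0 Q_0)
next
  case (Suc m)
  have "R n (real (Suc m)) = R n (real m) + real (Suc m) ^ n"
    using R_diff[of n "real (Suc m)"] by simp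
  moreover have "Q n (real (Suc m)) = Q n (real m) + real (Suc m) ^ n"
    using Q_diff[of n "real (Suc m)"] by simp
  ultimately show ?case using Suc by simp
qed


lemma R_coeffs: "R n x = (\<Sum>j\<le>Suc n. rc n j * x ^ j)"
proof -
  have "R n x = (\<Sum>k\<le>Suc n. (if k = 0 then 0 else sS n (k - 1) / real k) * pochhammer x k)"
    unfolding R_def by (subst sum.atMost_Suc_shift) (simp del: of_nat_Suc)
  also have "\<dots> = (\<Sum>j\<le>Suc n. rc n j * x ^ j)"
    unfolding rc_def by (rule poch_coeffs)
  finally show ?thesis .
qed

lemma Q_coeffs: "Q n x = (\<Sum>j\<le>Suc n. qc n j * x ^ j)"
proof -
  have "Q n x = (-1) ^ Suc n * (\<Sum>i\<le>n. real (Suc n choose i) * bernoulli i * (-x) ^ (Suc n - i)) / real (Suc n)"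
    unfolding Q_def bpoly_sum by simp
  also have "\<dots> = (\<Sum>i\<le>n. (-1) ^ Suc n * real (Suc n choose i) * bernoulli i * (-x) ^ (Suc n - i) / real (Suc n))"
    by (simp add: sum_distrib_left sum_divide_distrib mult.assoc)
  also have "\<dots> = (\<Sum>i<Suc n. qc n (Suc (n - i)) * x ^ Suc (n - i))"
    unfolding lessThan_Suc_atMost
  proof (intro sum.cong refl)
    fix i assume "i \<in> {..n}"
    then have i: "i \<le> n" by simp
    then have e1: "Suc (n - i) = Suc n - i" by simp
    have e2: "Suc n - (Suc n - i) = i" using i by simp
    have e3: "(Suc n choose (Suc n - i)) = (Suc n choose i)" using i by (simp add: binomial_symmetric[symmetric])
    have e4: "(-1::real) ^ (Suc n + (Suc n - i)) = (-1) ^ Suc n * (-1) ^ (Suc n - i)" by (simp add: power_add)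
    show "(-1) ^ Suc n * real (Suc n choose i) * bernoulli i * (-x) ^ (Suc n - i) / real (Suc n) =
        qc n (Suc (n - i)) * x ^ Suc (n - i)"
    proof -
      have q: "qc n (Suc n - i) = (-1)^(Suc n + (Suc n - i)) * real (Suc n choose i) * bernoulli i / real (Suc n)"
        using i unfolding qc_def e2 e3 by (simp del: of_nat_Suc)
      show ?thesis unfolding e1 q e4 power_minus[of x "Suc n - i"] by (simp add: field_simps)
    qed
  qed
  also have "\<dots> = (\<Sum>j<Suc n. qc n (Suc j) * x ^ Suc j)"
    using sum.nat_diff_reindex[of "\<lambda>j. qc n (Suc j) * x ^ Suc j" "Suc n"] by simp
  also have "\<dots> = (\<Sum>j\<le>Suc n. qc n j * x ^ j)"
    unfolding lessThan_Suc_atMost by (subst sum.atMost_Suc_shift) (simp add: qc_def)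
  finally show ?thesis .
qed


lemma rc_qc: "j \<le> Suc n \<Longrightarrow> rc n j = qc n j"
proof -
  assume j: "j \<le> Suc n"
  have "range real \<subseteq> {x. (\<Sum>i\<le>Suc n. (rc n i - qc n i) * x ^ i) = 0}"
  proof
    fix y assume "y \<in> range real"
    then obtain m where "y = real m" by auto
    then show "y \<in> {x. (\<Sum>i\<le>Suc n. (rc n i - qc n i) * x ^ i) = 0}"
      using RQ_nat[of n m] R_coeffs[of n y] Q_coeffs[of n y]
      by (simp add: left_diff_distrib sum_subtractf)
  qed
  moreover have inf: "infinite (range (real :: nat \<Rightarrow> real))"
    using range_inj_infinite[OF inj_of_nat] .
  ultimately have "infinite {x::real. (\<Sum>i\<le>Suc n. (rc n i - qc n i) * x ^ i) = 0}"
    by (rule infinite_super)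
  then have "\<not> (\<exists>i\<le>Suc n. rc n i - qc n i \<noteq> 0)"
    using polyfun_finite_roots[of "\<lambda>i. rc n i - qc n i" "Suc n"] by metis
  then show ?thesis using j by auto
qed

lemma g_coeffs: "g n x = (\<Sum>j\<le>n. a n j * x ^ j)"
  unfolding g_def a_def using poch_coeffs[where w="\<lambda>k. sS n k * harm k" and n=n and x=x]
  by (simp add: mult.assoc)

lemma xg_coeffs: "x * g n x = (\<Sum>j\<le>Suc n. (if j = 0 then 0 else a n (j - 1)) * x ^ j)"
  unfolding g_coeffs by (subst sum.atMost_Suc_shift) (simp add: sum_distrib_left algebra_simps)

lemma a_rec: "j \<le> Suc n \<Longrightarrow> a (Suc n) j = (if j = 0 then 0 else a n (j - 1)) + qc n j"
proof -
  assume j: "j \<le> Suc n"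
  have "\<forall>x. (\<Sum>j\<le>Suc n. a (Suc n) j * x ^ j) = (\<Sum>j\<le>Suc n. ((if j = 0 then 0 else a n (j - 1)) + rc n j) * x ^ j)"
  proof
    fix x :: real
    show "(\<Sum>j\<le>Suc n. a (Suc n) j * x ^ j) = (\<Sum>j\<le>Suc n. ((if j = 0 then 0 else a n (j - 1)) + rc n j) * x ^ j)"
      using g_rec[of n x] g_coeffs[of "Suc n" x] xg_coeffs[of x n] R_coeffs[of n x]
      by (simp add: distrib_right sum.distrib)
  qed
  then have "a (Suc n) j = (if j = 0 then 0 else a n (j - 1)) + rc n j"
    using j by (subst (asm) polyfun_eq_coeffs) blast
  then show ?thesis using rc_qc[OF j] by simp
qed

lemma binom_id:
  fixes c d m N D :: real
  assumes "m * d = N * c" "N - m = D" "D \<noteq> 0" "N \<noteq> 0"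
  shows "(c - 1) / D + d / N = (d - 1) / D"
proof -
  have "d * D = N * (d - c)" using assms by (simp add: algebra_simps flip: assms(2))
  then have "d / N = (d - c) / D" using assms(3,4) by (simp add: frac_eq_eq)
  then show ?thesis by (simp add: add_divide_distrib[symmetric])
qed

lemma a_closed: "j < n \<Longrightarrow> a n j = (-1) ^ (n - j) * (real (n choose j) - 1) * bernoulli (n - j) / real (n - j)"
proof (induction n arbitrary: j)
  case 0 then show ?case by simp
next
  case (Suc n)
  show ?case
  proof (cases j)
    case 0
    then show ?thesis using a_rec[of 0 n] by (simp add: qc_def)
  next
    case (Suc i)
    with Suc.prems have i: "i < n" by simp
    have IH: "a n i = (-1) ^ (n - i) * (real (n choose i) - 1) * bernoulli (n - i) / real (n - i)"
      using Suc.IH[OF i] .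
    have s: "(-1::real) ^ (Suc n + Suc i) = (-1) ^ (n - i)"
    proof -
      have "Suc n + Suc i = (n - i) + 2 * Suc i" using i by simp
      then show ?thesis unfolding \<open>Suc n + Suc i = (n - i) + 2 * Suc i\<close> power_add power_mult by simp
    qed
    have r: "a (Suc n) (Suc i) = a n i + qc n (Suc i)"
      using a_rec[of "Suc i" n] i by simp
    have key: "(real (n choose i) - 1) / real (n - i) + real (Suc n choose Suc i) / real (Suc n)
        = (real (Suc n choose Suc i) - 1) / real (n - i)"
    proof (rule binom_id[where m = "real (Suc i)"])
      have "Suc n * (n choose i) = (Suc n choose Suc i) * Suc i" by (rule Suc_times_binomial_eq)
      then show "real (Suc i) * real (Suc n choose Suc i) = real (Suc n) * real (n choose i)"
        by (metis mult.commute of_nat_mult)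
      show "real (Suc n) - real (Suc i) = real (n - i)" using i by simp
      show "real (n - i) \<noteq> 0" using i by simp
      show "real (Suc n) \<noteq> 0" by simp
    qed
    have "a (Suc n) j = (-1) ^ (n - i) * ((real (n choose i) - 1) / real (n - i) + real (Suc n choose Suc i) / real (Suc n)) * bernoulli (n - i)"
      unfolding Suc r IH qc_def using s by (simp add: field_simps del: of_nat_Suc)
    also have "\<dots> = (-1) ^ (n - i) * (real (Suc n choose Suc i) - 1) * bernoulli (n - i) / real (n - i)"
      unfolding key by simp
    finally show ?thesis using Suc by simp
  qed
qed

theorem mainTheorem1:
  fixes n j :: nat
  assumes "n \<ge> 1" and "j \<le> n - 1"
  shows "(\<Sum>k=j..n. (-1) ^ (k - j) * real (Stirling n k) * real (stirling k j) * harm k)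
         = (real (n choose j) - 1) * bernoulli (n - j) / real (n - j)"
proof -
  have jn: "j < n" using assms by simp
  have "(\<Sum>k=j..n. (-1) ^ (k - j) * real (Stirling n k) * real (stirling k j) * harm k)
      = (\<Sum>k=j..n. (-1) ^ (n - j) * (sS n k * harm k * real (stirling k j)))"
  proof (intro sum.cong refl)
    fix k assume "k \<in> {j..n}"
    then have k: "j \<le> k" "k \<le> n" by auto
    have e: "n - j + (n - k) = (k - j) + 2 * (n - k)" using k by simp
    have s': "(-1::real) ^ (n - j) * (-1) ^ (n - k) = (-1) ^ (k - j)"
      unfolding power_add[symmetric] e power_add power_mult by simp
    have "(-1) ^ (n - j) * (sS n k * harm k * real (stirling k j))
        = ((-1::real) ^ (n - j) * (-1) ^ (n - k)) * real (Stirling n k) * real (stirling k j) * harm k"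
      unfolding sS_def by (simp add: mult_ac)
    then show "(-1) ^ (k - j) * real (Stirling n k) * real (stirling k j) * harm k
        = (-1) ^ (n - j) * (sS n k * harm k * real (stirling k j))"
      unfolding s' by (rule sym)
  qed
  also have "\<dots> = (-1) ^ (n - j) * a n j"
  proof -
    have aa: "(\<Sum>k=j..n. sS n k * harm k * real (stirling k j)) = a n j"
      unfolding a_def by (rule sum.mono_neutral_left) auto
    show ?thesis by (simp add: sum_distrib_left flip: aa)
  qed
  also have "\<dots> = (real (n choose j) - 1) * bernoulli (n - j) / real (n - j)"
    unfolding a_closed[OF jn] by (simp flip: power_add add: power_mult_distrib[symmetric])
  finally show ?thesis .
qed

end
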